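(* Let $e=(B,T)$ be an edge with disjoint nonempty $T,B\subseteq[d]$, $m=|T|$, $r=|T|+|B|$, and let $\theta\in\mathbb{R}^d$ satisfy $|\theta_i|\le b$ for all $i$. Then $$\sum_{i\in T\cup B}\Big(\frac{\partial\log\mathbb{P}_\theta(e)}{\partial\theta_i}\Big)^2\ \le\ 2\,m\,e^{2b}\Big(\frac{r}{r-m}\Big)^2,$$ and $\partial\log\mathbb{P}_\theta(e)/\partial\theta_i=0$ for $i\notin T\cup B$.
   Context: PL model: items $[d]$, parameter $\theta\in\mathbb{R}^d$. For disjoint nonempty $T,B\subseteq[d]$, $\mathbb{P}_\theta(e)=\mathbb{P}_\theta(B\prec T)=\sum_{\sigma}\prod_{u=1}^{|T|}\frac{e^{\theta_{\sigma(u)}}}{\sum_{c=u}^{|T|}e^{\theta_{\sigma(c)}}+\sum_{i\in B}e^{\theta_i}}$, the sum over all orderings $\sigma=(\sigma(1),\dots,\sigma(|T|))$ of $T$; this is the PL probability that all items of $T$ are ranked above all items of $B$ when $T\cup B$ is offered. *)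

theory Defs
  imports "HOL-Analysis.Analysis" "HOL-Combinatorics.Multiset_Permutations"
begin

text \<open>Plackett--Luce probability that all items of T are ranked above all items of B
  when T \<union> B is offered. Items are natural numbers (the paper's [d] is {..<d});
  an ordering of T is a distinct list enumerating T; position u (0-indexed).\<close>
definition PL_prob :: "(nat \<Rightarrow> real) \<Rightarrow> nat set \<Rightarrow> nat set \<Rightarrow> real" where
  "PL_prob \<theta> T B =
     (\<Sum>\<sigma>\<in>permutations_of_set T.
        \<Prod>u<card T. exp (\<theta> (\<sigma> ! u)) /
           ((\<Sum>c=u..<card T. exp (\<theta> (\<sigma> ! c))) + (\<Sum>i\<in>B. exp (\<theta> i))))"

end

theory Submission
  imports Defs
begin


definition Sd :: "(nat\<Rightarrow>real) \<Rightarrow> nat list \<Rightarrow> nat set \<Rightarrow> nat \<Rightarrow> real" where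
 "Sd \<theta> \<sigma> B u = (\<Sum>c=u..<length \<sigma>. exp (\<theta> (\<sigma>!c))) + (\<Sum>j\<in>B. exp (\<theta> j))"
definition Ld :: "(nat\<Rightarrow>real) \<Rightarrow> nat list \<Rightarrow> nat set \<Rightarrow> real" where
 "Ld \<theta> \<sigma> B = (\<Sum>u<length \<sigma>. \<theta> (\<sigma>!u) - ln (Sd \<theta> \<sigma> B u))"
definition Sd' :: "(nat\<Rightarrow>real) \<Rightarrow> nat \<Rightarrow> nat list \<Rightarrow> nat set \<Rightarrow> nat \<Rightarrow> real" where
 "Sd' \<theta> i \<sigma> B u = (\<Sum>c=u..<length \<sigma>. of_bool (\<sigma>!c=i) * exp (\<theta> (\<sigma>!c))) + (\<Sum>j\<in>B. of_bool (j=i) * exp (\<theta> j))"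
definition Ld' :: "(nat\<Rightarrow>real) \<Rightarrow> nat \<Rightarrow> nat list \<Rightarrow> nat set \<Rightarrow> real" where
 "Ld' \<theta> i \<sigma> B = (\<Sum>u<length \<sigma>. of_bool (\<sigma>!u=i) - Sd' \<theta> i \<sigma> B u / Sd \<theta> \<sigma> B u)"

lemma Sd_pos: "finite B \<Longrightarrow> B \<noteq> {} \<Longrightarrow> Sd \<theta> \<sigma> B u > 0"
  unfolding Sd_def
  by (intro add_nonneg_pos sum_nonneg sum_pos) auto

lemma PL_eq:
  assumes "finite B" "B \<noteq> {}"
  shows "PL_prob \<theta> T B = (\<Sum>\<sigma>\<in>permutations_of_set T. exp (Ld \<theta> \<sigma> B))"
  unfolding PL_prob_def
proof (rule sum.cong[OF refl])
  fix \<sigma> assume s: "\<sigma> \<in> permutations_of_set T"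
  have len: "card T = length \<sigma>" using length_finite_permutations_of_set[OF s] by simp
  have "exp (Ld \<theta> \<sigma> B) = (\<Prod>u<length \<sigma>. exp (\<theta> (\<sigma>!u) - ln (Sd \<theta> \<sigma> B u)))"
    unfolding Ld_def by (simp add: exp_sum)
  also have "\<dots> = (\<Prod>u<length \<sigma>. exp (\<theta> (\<sigma>!u)) / Sd \<theta> \<sigma> B u)"
    using Sd_pos[OF assms] by (simp add: exp_diff)
  finally show "(\<Prod>u<card T. exp (\<theta> (\<sigma> ! u)) /
           ((\<Sum>c=u..<card T. exp (\<theta> (\<sigma> ! c))) + (\<Sum>i\<in>B. exp (\<theta> i)))) = exp (Ld \<theta> \<sigma> B)"
    by (simp add: len Sd_def)
qed

lemma d_upd: "((\<lambda>t. (\<theta>(i:=t)) j) has_real_derivative of_bool (j=i)) (at (\<theta> i))"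
  by (cases "j = i") auto

lemma d_exp_upd: "((\<lambda>t. exp ((\<theta>(i:=t)) j)) has_real_derivative (of_bool (j=i) * exp (\<theta> j))) (at (\<theta> i))"
  by (cases "j = i") (auto intro!: derivative_eq_intros)

lemma d_Sd: "((\<lambda>t. Sd (\<theta>(i:=t)) \<sigma> B u) has_real_derivative Sd' \<theta> i \<sigma> B u) (at (\<theta> i))"
  unfolding Sd_def Sd'_def
  by (intro DERIV_add DERIV_sum d_exp_upd)

lemma d_Ld:
  assumes "finite B" "B \<noteq> {}"
  shows "((\<lambda>t. Ld (\<theta>(i:=t)) \<sigma> B) has_real_derivative Ld' \<theta> i \<sigma> B) (at (\<theta> i))"
  unfolding Ld_def Ld'_def
proof (intro DERIV_sum DERIV_diff d_upd)
  fix u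
  have "DERIV ln (Sd ((\<theta>(i:=t)) ) \<sigma> B u) :> 1 / Sd (\<theta>(i:=t)) \<sigma> B u" for t
    using Sd_pos[OF assms] by (intro DERIV_ln_divide) 
  from DERIV_chain2[OF this[of "\<theta> i"] d_Sd[of \<theta> i \<sigma> B u]]
  show "((\<lambda>t. ln (Sd (\<theta>(i := t)) \<sigma> B u)) has_real_derivative Sd' \<theta> i \<sigma> B u / Sd \<theta> \<sigma> B u) (at (\<theta> i))"
    by simp
qed

definition Dv where
  "Dv \<theta> T B i = (\<Sum>\<sigma>\<in>permutations_of_set T. exp (Ld \<theta> \<sigma> B) * Ld' \<theta> i \<sigma> B) /
                 (\<Sum>\<sigma>\<in>permutations_of_set T. exp (Ld \<theta> \<sigma> B))"

lemma d_main:
  assumes "finite B" "B \<noteq> {}" "finite T"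
  shows "((\<lambda>t. ln (PL_prob (\<theta>(i := t)) T B)) has_real_derivative Dv \<theta> T B i) (at (\<theta> i))"
proof -
  have eq: "(\<lambda>t. ln (PL_prob (\<theta>(i := t)) T B)) = (\<lambda>t. ln (\<Sum>\<sigma>\<in>permutations_of_set T. exp (Ld (\<theta>(i := t)) \<sigma> B)))"
    using PL_eq[OF assms(1,2)] by simp
  have pos: "(\<Sum>\<sigma>\<in>permutations_of_set T. exp (Ld \<theta> \<sigma> B)) > 0"
    using assms(3) by (intro sum_pos) auto
  have ds: "((\<lambda>t. \<Sum>\<sigma>\<in>permutations_of_set T. exp (Ld (\<theta>(i := t)) \<sigma> B)) has_real_derivative
      (\<Sum>\<sigma>\<in>permutations_of_set T. exp (Ld \<theta> \<sigma> B) * Ld' \<theta> i \<sigma> B)) (at (\<theta> i))"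
  proof (intro DERIV_sum)
    fix \<sigma>
    from DERIV_chain2[OF DERIV_exp d_Ld[OF assms(1,2), of \<theta> i \<sigma>]]
    show "((\<lambda>t. exp (Ld (\<theta>(i := t)) \<sigma> B)) has_real_derivative exp (Ld \<theta> \<sigma> B) * Ld' \<theta> i \<sigma> B) (at (\<theta> i))"
      by simp
  qed
  from DERIV_chain2[OF DERIV_ln_divide ds] pos
  show ?thesis unfolding eq Dv_def by (simp add: field_simps)
qed



lemma reidx:
  assumes "\<sigma> \<in> permutations_of_set T"
  shows "(\<Sum>u<length \<sigma>. f (\<sigma>!u)) = (\<Sum>j\<in>T. (f j :: real))"
proof -
  have "bij_betw ((!) \<sigma>) {..<length \<sigma>} T"
    using permutations_of_setD[OF assms] by (intro bij_betw_nth) auto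
  from sum.reindex_bij_betw[OF this, of f] show ?thesis by simp
qed

context
  fixes \<theta> :: "nat \<Rightarrow> real" and T B :: "nat set" and b :: real and \<sigma> :: "nat list"
  assumes fT: "finite T" and fB: "finite B" and nB: "B \<noteq> {}" and dis: "T \<inter> B = {}"
    and bnd: "\<And>j. j \<in> T \<union> B \<Longrightarrow> \<bar>\<theta> j\<bar> \<le> b"
    and sig: "\<sigma> \<in> permutations_of_set T"
begin

lemma len: "length \<sigma> = card T" using length_finite_permutations_of_set[OF sig] .
lemma setsig: "set \<sigma> = T" using permutations_of_setD[OF sig] by simp
lemma nthT: "c < length \<sigma> \<Longrightarrow> \<sigma>!c \<in> T" using setsig by auto

lemma w_le: "j \<in> T \<union> B \<Longrightarrow> exp (\<theta> j) \<le> exp b" using bnd[of j] by auto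
lemma w_ge: "j \<in> T \<union> B \<Longrightarrow> exp (-b) \<le> exp (\<theta> j)" using bnd[of j] by auto

lemma W_ge: "real (card B) * exp (-b) \<le> (\<Sum>j\<in>B. exp (\<theta> j))"
  using sum_bounded_below[of B "exp (-b)" "\<lambda>j. exp (\<theta> j)"] w_ge by auto

lemma W_le_Sd: "(\<Sum>j\<in>B. exp (\<theta> j)) \<le> Sd \<theta> \<sigma> B u"
  unfolding Sd_def by (simp add: sum_nonneg)

lemma Wpos: "(\<Sum>j\<in>B. exp (\<theta> j)) > 0" using fB nB by (intro sum_pos) auto

lemma frac_bound:
  assumes "i \<in> T \<union> B"
  shows "exp (\<theta> i) / Sd \<theta> \<sigma> B u \<le> exp (2*b) / real (card B)"
proof -
  have q: "real (card B) > 0" using fB nB by (simp add: card_gt_0_iff)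
  have "exp (\<theta> i) / Sd \<theta> \<sigma> B u \<le> exp b / (real (card B) * exp (-b))"
    using w_le[OF assms] W_ge W_le_Sd[of u] q
    by (intro frac_le) auto
  also have "\<dots> = exp (2*b) / real (card B)"
    using q by (simp add: exp_minus field_simps mult_exp_exp)
  finally show ?thesis .
qed

lemma Sd'_B: "i \<in> B \<Longrightarrow> Sd' \<theta> i \<sigma> B u = exp (\<theta> i)"
proof -
  assume iB: "i \<in> B"
  have "\<sigma>!c \<noteq> i" if "c < length \<sigma>" for c using nthT[OF that] iB dis by auto
  then have z: "(\<Sum>c=u..<length \<sigma>. of_bool (\<sigma>!c=i) * exp (\<theta> (\<sigma>!c))) = (0::real)"
    by (intro sum.neutral) auto
  have "(\<Sum>j\<in>B. of_bool (j=i) * exp (\<theta> j)) = (\<Sum>j\<in>B. if j = i then exp (\<theta> j) else 0)"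
    by (intro sum.cong) auto
  also have "\<dots> = exp (\<theta> i)" using fB iB by (simp add: sum.delta)
  finally show ?thesis unfolding Sd'_def z by simp
qed

lemma Ld'_B: "i \<in> B \<Longrightarrow> Ld' \<theta> i \<sigma> B = - (\<Sum>u<length \<sigma>. exp (\<theta> i) / Sd \<theta> \<sigma> B u)"
proof -
  assume iB: "i \<in> B"
  have "\<sigma>!u \<noteq> i" if "u < length \<sigma>" for u using nthT[OF that] iB dis by auto
  then show ?thesis unfolding Ld'_def using Sd'_B[OF iB]
    by (simp add: sum_negf)
qed

lemma yB_bounds:
  assumes "i \<in> B"
  shows "0 \<le> (\<Sum>u<length \<sigma>. exp (\<theta> i) / Sd \<theta> \<sigma> B u)"
    and "(\<Sum>u<length \<sigma>. exp (\<theta> i) / Sd \<theta> \<sigma> B u) \<le> real (card T) * (exp (2*b) / real (card B))"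
proof -
  show "0 \<le> (\<Sum>u<length \<sigma>. exp (\<theta> i) / Sd \<theta> \<sigma> B u)"
    using Sd_pos[OF fB nB] by (intro sum_nonneg) (auto intro: less_imp_le)
  have "(\<Sum>u<length \<sigma>. exp (\<theta> i) / Sd \<theta> \<sigma> B u) \<le> (\<Sum>u<length \<sigma>. exp (2*b) / real (card B))"
    using assms by (intro sum_mono frac_bound) auto
  then show "(\<Sum>u<length \<sigma>. exp (\<theta> i) / Sd \<theta> \<sigma> B u) \<le> real (card T) * (exp (2*b) / real (card B))"
    by (simp add: len)
qed

lemma yB_sum: "(\<Sum>i\<in>B. (\<Sum>u<length \<sigma>. exp (\<theta> i) / Sd \<theta> \<sigma> B u)) \<le> real (card T)"
proof -
  have "(\<Sum>i\<in>B. (\<Sum>u<length \<sigma>. exp (\<theta> i) / Sd \<theta> \<sigma> B u))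
      = (\<Sum>u<length \<sigma>. (\<Sum>i\<in>B. exp (\<theta> i)) / Sd \<theta> \<sigma> B u)"
    by (subst sum.swap) (simp add: sum_divide_distrib)
  also have "\<dots> \<le> (\<Sum>u<length \<sigma>. 1)"
    using W_le_Sd Sd_pos[OF fB nB] by (intro sum_mono) (simp add: divide_le_eq)
  finally show ?thesis by (simp add: len)
qed

lemma Sd'_T_le: "i \<in> T \<Longrightarrow> Sd' \<theta> i \<sigma> B u \<le> exp (\<theta> i)"
proof -
  assume iT: "i \<in> T"
  have "(\<Sum>j\<in>B. of_bool (j=i) * exp (\<theta> j)) = (0::real)" using iT dis by (intro sum.neutral) auto
  then have "Sd' \<theta> i \<sigma> B u = (\<Sum>c=u..<length \<sigma>. of_bool (\<sigma>!c=i) * exp (\<theta> (\<sigma>!c)))"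
    unfolding Sd'_def by simp
  also have "\<dots> \<le> (\<Sum>c\<in>{..<length \<sigma>}. of_bool (\<sigma>!c=i) * exp (\<theta> (\<sigma>!c)))"
    by (intro sum_mono2) auto
  also have "\<dots> = (\<Sum>j\<in>T. of_bool (j=i) * exp (\<theta> j))"
    using reidx[OF sig, of "\<lambda>j. of_bool (j=i) * exp (\<theta> j)"] by simp
  also have "\<dots> = (\<Sum>j\<in>T. if j = i then exp (\<theta> j) else 0)" by (intro sum.cong) auto
  also have "\<dots> = exp (\<theta> i)" using fT iT by (simp add: sum.delta)
  finally show ?thesis .
qed

lemma Sd'_nonneg: "0 \<le> Sd' \<theta> i \<sigma> B u"
  unfolding Sd'_def by (intro add_nonneg_nonneg sum_nonneg) auto

lemma Ld'_T: "i \<in> T \<Longrightarrow> Ld' \<theta> i \<sigma> B = 1 - (\<Sum>u<length \<sigma>. Sd' \<theta> i \<sigma> B u / Sd \<theta> \<sigma> B u)"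
proof -
  assume iT: "i \<in> T"
  have "(\<Sum>u<length \<sigma>. of_bool (\<sigma>!u=i)) = (\<Sum>j\<in>T. of_bool (j=i) :: real)"
    using reidx[OF sig, of "\<lambda>j. of_bool (j=i)"] by simp
  also have "\<dots> = (\<Sum>j\<in>T. if j = i then 1 else 0)" by (intro sum.cong) auto
  also have "\<dots> = 1" using fT iT by (simp add: sum.delta)
  finally show ?thesis unfolding Ld'_def by (simp add: sum_subtractf)
qed

lemma xT_bounds:
  assumes "i \<in> T"
  shows "0 \<le> (\<Sum>u<length \<sigma>. Sd' \<theta> i \<sigma> B u / Sd \<theta> \<sigma> B u)"
    and "(\<Sum>u<length \<sigma>. Sd' \<theta> i \<sigma> B u / Sd \<theta> \<sigma> B u) \<le> real (card T) * (exp (2*b) / real (card B))"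
proof -
  show "0 \<le> (\<Sum>u<length \<sigma>. Sd' \<theta> i \<sigma> B u / Sd \<theta> \<sigma> B u)"
    using Sd_pos[OF fB nB] Sd'_nonneg by (intro sum_nonneg divide_nonneg_nonneg) (auto intro: less_imp_le)
  have "(\<Sum>u<length \<sigma>. Sd' \<theta> i \<sigma> B u / Sd \<theta> \<sigma> B u) \<le> (\<Sum>u<length \<sigma>. exp (2*b) / real (card B))"
  proof (intro sum_mono)
    fix u
    have "Sd' \<theta> i \<sigma> B u / Sd \<theta> \<sigma> B u \<le> exp (\<theta> i) / Sd \<theta> \<sigma> B u"
      using Sd'_T_le[OF assms] Sd_pos[OF fB nB] by (intro divide_right_mono) (auto intro: less_imp_le)
    also have "\<dots> \<le> exp (2*b) / real (card B)" using assms by (intro frac_bound) auto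
    finally show "Sd' \<theta> i \<sigma> B u / Sd \<theta> \<sigma> B u \<le> exp (2*b) / real (card B)" .
  qed
  then show "(\<Sum>u<length \<sigma>. Sd' \<theta> i \<sigma> B u / Sd \<theta> \<sigma> B u) \<le> real (card T) * (exp (2*b) / real (card B))"
    by (simp add: len)
qed

lemma xT_sum: "(\<Sum>i\<in>T. (\<Sum>u<length \<sigma>. Sd' \<theta> i \<sigma> B u / Sd \<theta> \<sigma> B u)) \<le> real (card T)"
proof -
  have key: "(\<Sum>i\<in>T. Sd' \<theta> i \<sigma> B u) \<le> Sd \<theta> \<sigma> B u" for u
  proof -
    have zB: "(\<Sum>j\<in>B. of_bool (j=i) * exp (\<theta> j)) = (0::real)" if "i \<in> T" for i
      using that dis by (intro sum.neutral) auto
    have "(\<Sum>i\<in>T. Sd' \<theta> i \<sigma> B u) = (\<Sum>i\<in>T. \<Sum>c=u..<length \<sigma>. of_bool (\<sigma>!c=i) * exp (\<theta> (\<sigma>!c)))"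
      unfolding Sd'_def using zB by (intro sum.cong) auto
    also have "\<dots> = (\<Sum>c=u..<length \<sigma>. \<Sum>i\<in>T. of_bool (\<sigma>!c=i) * exp (\<theta> (\<sigma>!c)))"
      by (rule sum.swap)
    also have "\<dots> = (\<Sum>c=u..<length \<sigma>. exp (\<theta> (\<sigma>!c)))"
    proof (intro sum.cong refl)
      fix c assume "c \<in> {u..<length \<sigma>}"
      then have cT: "\<sigma>!c \<in> T" using nthT by auto
      have "(\<Sum>i\<in>T. of_bool (\<sigma>!c=i) * exp (\<theta> (\<sigma>!c))) = (\<Sum>i\<in>T. if \<sigma>!c = i then exp (\<theta> (\<sigma>!c)) else 0)"
        by (intro sum.cong) auto
      also have "\<dots> = exp (\<theta> (\<sigma>!c))" using fT cT by (simp add: sum.delta)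
      finally show "(\<Sum>i\<in>T. of_bool (\<sigma>!c=i) * exp (\<theta> (\<sigma>!c))) = exp (\<theta> (\<sigma>!c))" .
    qed
    also have "\<dots> \<le> Sd \<theta> \<sigma> B u" unfolding Sd_def using Wpos by simp
    finally show ?thesis .
  qed
  have "(\<Sum>i\<in>T. (\<Sum>u<length \<sigma>. Sd' \<theta> i \<sigma> B u / Sd \<theta> \<sigma> B u))
      = (\<Sum>u<length \<sigma>. (\<Sum>i\<in>T. Sd' \<theta> i \<sigma> B u) / Sd \<theta> \<sigma> B u)"
    by (subst sum.swap) (simp add: sum_divide_distrib)
  also have "\<dots> \<le> (\<Sum>u<length \<sigma>. 1)"
    using key Sd_pos[OF fB nB] by (intro sum_mono) (simp add: divide_le_eq)
  finally show ?thesis by (simp add: len)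
qed

lemma Ld'_out: "i \<notin> T \<union> B \<Longrightarrow> Ld' \<theta> i \<sigma> B = 0"
proof -
  assume i: "i \<notin> T \<union> B"
  have ne: "\<sigma>!c \<noteq> i" if "c < length \<sigma>" for c using nthT[OF that] i by auto
  have "Sd' \<theta> i \<sigma> B u = 0" for u unfolding Sd'_def using ne i
    by (auto intro!: sum.neutral)
  then show ?thesis unfolding Ld'_def using ne by (auto intro!: sum.neutral)
qed

end



lemma avg_bounds:
  fixes e v :: "'a \<Rightarrow> real"
  assumes "finite S" "S \<noteq> {}" "\<And>s. s \<in> S \<Longrightarrow> e s > 0"
    and "\<And>s. s \<in> S \<Longrightarrow> lo \<le> v s" "\<And>s. s \<in> S \<Longrightarrow> v s \<le> hi"
  shows "lo \<le> (\<Sum>s\<in>S. e s * v s) / (\<Sum>s\<in>S. e s)" "(\<Sum>s\<in>S. e s * v s) / (\<Sum>s\<in>S. e s) \<le> hi"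
proof -
  have P: "(\<Sum>s\<in>S. e s) > 0" using assms by (intro sum_pos) auto
  have "lo * (\<Sum>s\<in>S. e s) \<le> (\<Sum>s\<in>S. e s * v s)"
    unfolding sum_distrib_left using assms by (intro sum_mono) (simp add: mult.commute mult_left_mono less_imp_le)
  then show "lo \<le> (\<Sum>s\<in>S. e s * v s) / (\<Sum>s\<in>S. e s)" using P by (simp add: pos_le_divide_eq)
  have "(\<Sum>s\<in>S. e s * v s) \<le> hi * (\<Sum>s\<in>S. e s)"
    unfolding sum_distrib_left using assms by (intro sum_mono) (simp add: mult.commute mult_left_mono less_imp_le)
  then show "(\<Sum>s\<in>S. e s * v s) / (\<Sum>s\<in>S. e s) \<le> hi" using P by (simp add: pos_divide_le_eq)
qed

lemma sq_sum:
  fixes y :: "'a \<Rightarrow> real"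
  assumes "M \<ge> 0" "\<And>i. i \<in> I \<Longrightarrow> 0 \<le> y i" "\<And>i. i \<in> I \<Longrightarrow> y i \<le> M" "sum y I \<le> K"
  shows "(\<Sum>i\<in>I. (y i)\<^sup>2) \<le> M * K"
proof -
  have "(\<Sum>i\<in>I. (y i)\<^sup>2) \<le> (\<Sum>i\<in>I. M * y i)"
    using assms by (intro sum_mono) (simp add: power2_eq_square mult_right_mono)
  also have "\<dots> = M * sum y I" by (simp add: sum_distrib_left)
  also have "\<dots> \<le> M * K" using assms by (simp add: mult_left_mono)
  finally show ?thesis .
qed

lemma swap_avg:
  fixes e :: "'a \<Rightarrow> real" and f :: "'b \<Rightarrow> 'a \<Rightarrow> real"
  shows "(\<Sum>i\<in>I. (\<Sum>s\<in>S. e s * f i s) / P) = (\<Sum>s\<in>S. e s * (\<Sum>i\<in>I. f i s)) / P"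
proof -
  have "(\<Sum>i\<in>I. (\<Sum>s\<in>S. e s * f i s) / P) = (\<Sum>i\<in>I. \<Sum>s\<in>S. e s * f i s) / P"
    by (simp add: sum_divide_distrib)
  also have "(\<Sum>i\<in>I. \<Sum>s\<in>S. e s * f i s) = (\<Sum>s\<in>S. \<Sum>i\<in>I. e s * f i s)" by (rule sum.swap)
  also have "\<dots> = (\<Sum>s\<in>S. e s * (\<Sum>i\<in>I. f i s))" by (simp add: sum_distrib_left)
  finally show ?thesis .
qed

lemma final_arith:
  fixes m q a :: real
  assumes "m \<ge> 0" "q > 0" "a \<ge> 1"
  shows "m + 2 * m * (m * (a / q)) \<le> 2 * m * a * ((m + q) / (m + q - m))\<^sup>2"
proof -
  define t where "t = m / q"
  have t0: "t \<ge> 0" using assms by (simp add: t_def)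
  have "(m + q) / (m + q - m) = 1 + t" using assms by (simp add: t_def field_simps)
  then have r: "2 * m * a * ((m + q) / (m + q - m))\<^sup>2 = 2 * m * a * (1 + t)\<^sup>2" by simp
  have l: "m + 2 * m * (m * (a / q)) = m + 2 * m * a * t" by (simp add: t_def)
  have ma: "m \<le> m * a" using assms mult_left_mono[of 1 a m] by simp
  have "2 * m * a * (1 + 2*t) \<le> 2 * m * a * (1 + t)\<^sup>2"
    using assms t0 by (intro mult_left_mono) (auto simp: power2_eq_square algebra_simps)
  moreover have "0 \<le> m * a * t" using assms t0 by simp
  moreover have "0 \<le> m * a" using assms by simp
  moreover have "2*m*a*(1+2*t) = 2*(m*a) + 4*(m*a*t)" "m + 2 * m * a * t = m + 2*(m*a*t)" by algebra+
  ultimately have "m + 2 * m * a * t \<le> 2 * m * a * (1 + 2*t)" using ma by linarith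
  with \<open>2 * m * a * (1 + 2*t) \<le> 2 * m * a * (1 + t)\<^sup>2\<close> show ?thesis unfolding r l by linarith
qed



theorem mainTheorem9:
  fixes d :: nat and T B :: "nat set" and \<theta> :: "nat \<Rightarrow> real" and b :: real
  assumes "T \<subseteq> {..<d}" and "B \<subseteq> {..<d}"
    and "T \<noteq> {}" and "B \<noteq> {}" and "T \<inter> B = {}"
    and "\<forall>i<d. \<bar>\<theta> i\<bar> \<le> b"
  shows "\<exists>D :: nat \<Rightarrow> real.
           (\<forall>i<d. ((\<lambda>t. ln (PL_prob (\<theta>(i := t)) T B)) has_real_derivative D i) (at (\<theta> i)))
         \<and> (\<Sum>i\<in>T \<union> B. (D i)\<^sup>2)
              \<le> 2 * real (card T) * exp (2 * b)
                 * (real (card T + card B) / (real (card T + card B) - real (card T)))\<^sup>2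
         \<and> (\<forall>i<d. i \<notin> T \<union> B \<longrightarrow> D i = 0)"
proof -
  have fT: "finite T" using assms(1) finite_subset by blast
  have fB: "finite B" using assms(2) finite_subset by blast
  have bnd: "\<And>j. j \<in> T \<union> B \<Longrightarrow> \<bar>\<theta> j\<bar> \<le> b" using assms(1,2,6) by auto
  have b0: "b \<ge> 0" using assms(3) bnd by (metis Un_iff abs_ge_zero all_not_in_conv order_trans)
  define S where "S = permutations_of_set T"
  define e where "e = (\<lambda>\<sigma>. exp (Ld \<theta> \<sigma> B))"
  define P where "P = (\<Sum>\<sigma>\<in>S. e \<sigma>)"
  define m where "m = real (card T)"
  define q where "q = real (card B)"
  define M where "M = m * (exp (2*b) / q)"
  define y where "y = (\<lambda>i \<sigma>. (\<Sum>u<length \<sigma>. exp (\<theta> i) / Sd \<theta> \<sigma> B u))"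
  define x where "x = (\<lambda>i \<sigma>. (\<Sum>u<length \<sigma>. Sd' \<theta> i \<sigma> B u / Sd \<theta> \<sigma> B u))"
  have fS: "finite S" "S \<noteq> {}" using fT by (auto simp: S_def)
  have epos: "\<And>s. s \<in> S \<Longrightarrow> e s > 0" by (simp add: e_def)
  have Ppos: "P > 0" unfolding P_def using fS epos by (intro sum_pos) auto
  have q0: "q > 0" using fB assms(4) by (simp add: q_def card_gt_0_iff)
  have m0: "m \<ge> 0" by (simp add: m_def)
  have M0: "M \<ge> 0" using m0 q0 by (simp add: M_def)
  have Dv_eq: "Dv \<theta> T B i = (\<Sum>\<sigma>\<in>S. e \<sigma> * Ld' \<theta> i \<sigma> B) / P" for i
    by (simp add: Dv_def S_def e_def P_def)
  note ctx = fT fB assms(4) assms(5) bnd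
  define Y where "Y = (\<lambda>i. (\<Sum>\<sigma>\<in>S. e \<sigma> * y i \<sigma>) / P)"
  have DB: "Dv \<theta> T B i = - Y i" if "i \<in> B" for i
  proof -
    have "(\<Sum>\<sigma>\<in>S. e \<sigma> * Ld' \<theta> i \<sigma> B) = - (\<Sum>\<sigma>\<in>S. e \<sigma> * y i \<sigma>)"
      unfolding sum_negf[symmetric]
    proof (intro sum.cong refl)
      fix \<sigma> assume "\<sigma> \<in> S"
      then show "e \<sigma> * Ld' \<theta> i \<sigma> B = - (e \<sigma> * y i \<sigma>)"
        using Ld'_B[where \<theta>=\<theta> and T=T and B=B and b=b, OF ctx _ that, where \<sigma>=\<sigma>] \<open>\<sigma> \<in> S\<close> by (simp add: y_def S_def)
    qed
    then show ?thesis by (simp add: Dv_eq Y_def)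
  qed
  have Yb: "0 \<le> Y i \<and> Y i \<le> M" if "i \<in> B" for i
  proof -
    have h: "0 \<le> y i \<sigma> \<and> y i \<sigma> \<le> M" if "\<sigma> \<in> S" for \<sigma>
    proof -
      have s: "\<sigma> \<in> permutations_of_set T" using that by (simp add: S_def)
      show ?thesis using yB_bounds[where \<theta>=\<theta> and T=T and B=B and b=b, OF ctx s \<open>i \<in> B\<close>] by (simp add: y_def M_def m_def q_def)
    qed
    show ?thesis using avg_bounds[OF fS epos, where lo=0 and v="y i" and hi=M] h
      by (auto simp: Y_def P_def)
  qed
  have Ysum: "sum Y B \<le> m"
  proof -
    have "sum Y B = (\<Sum>\<sigma>\<in>S. e \<sigma> * (\<Sum>i\<in>B. y i \<sigma>)) / P" unfolding Y_def by (rule swap_avg)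
    also have "\<dots> \<le> m"
    proof -
      have h: "0 \<le> (\<Sum>i\<in>B. y i \<sigma>) \<and> (\<Sum>i\<in>B. y i \<sigma>) \<le> m" if "\<sigma> \<in> S" for \<sigma>
      proof -
        have s: "\<sigma> \<in> permutations_of_set T" using that by (simp add: S_def)
        show ?thesis using yB_sum[where \<theta>=\<theta> and T=T and B=B and b=b, OF ctx s] yB_bounds(1)[where \<theta>=\<theta> and T=T and B=B and b=b, OF ctx s]
          by (auto simp: y_def m_def intro: sum_nonneg)
      qed
      show ?thesis unfolding P_def
        using avg_bounds(2)[OF fS epos, where v="\<lambda>\<sigma>. \<Sum>i\<in>B. y i \<sigma>" and lo=0 and hi=m] h by auto
    qed
    finally show ?thesis .
  qed
  define X where "X = (\<lambda>i. (\<Sum>\<sigma>\<in>S. e \<sigma> * x i \<sigma>) / P)"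
  have DT: "Dv \<theta> T B i = 1 - X i" if "i \<in> T" for i
  proof -
    have "(\<Sum>\<sigma>\<in>S. e \<sigma> * Ld' \<theta> i \<sigma> B) = (\<Sum>\<sigma>\<in>S. e \<sigma> - e \<sigma> * x i \<sigma>)"
    proof (intro sum.cong refl)
      fix \<sigma> assume "\<sigma> \<in> S"
      then show "e \<sigma> * Ld' \<theta> i \<sigma> B = e \<sigma> - e \<sigma> * x i \<sigma>"
        using Ld'_T[where \<theta>=\<theta> and T=T and B=B and b=b, OF ctx _ that, where \<sigma>=\<sigma>] \<open>\<sigma> \<in> S\<close> by (simp add: x_def S_def right_diff_distrib)
    qed
    also have "\<dots> = P - (\<Sum>\<sigma>\<in>S. e \<sigma> * x i \<sigma>)" by (simp add: sum_subtractf P_def)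
    finally show ?thesis using Ppos by (simp add: Dv_eq X_def diff_divide_distrib)
  qed
  have Xb: "0 \<le> X i \<and> X i \<le> M" if "i \<in> T" for i
  proof -
    have h: "0 \<le> x i \<sigma> \<and> x i \<sigma> \<le> M" if "\<sigma> \<in> S" for \<sigma>
    proof -
      have s: "\<sigma> \<in> permutations_of_set T" using that by (simp add: S_def)
      show ?thesis using xT_bounds[where \<theta>=\<theta> and T=T and B=B and b=b, OF ctx s \<open>i \<in> T\<close>] by (simp add: x_def M_def m_def q_def)
    qed
    show ?thesis using avg_bounds[OF fS epos, where lo=0 and v="x i" and hi=M] h
      by (auto simp: X_def P_def)
  qed
  have Xsum: "sum X T \<le> m"
  proof -
    have "sum X T = (\<Sum>\<sigma>\<in>S. e \<sigma> * (\<Sum>i\<in>T. x i \<sigma>)) / P" unfolding X_def by (rule swap_avg)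
    also have "\<dots> \<le> m"
    proof -
      have h: "0 \<le> (\<Sum>i\<in>T. x i \<sigma>) \<and> (\<Sum>i\<in>T. x i \<sigma>) \<le> m" if "\<sigma> \<in> S" for \<sigma>
      proof -
        have s: "\<sigma> \<in> permutations_of_set T" using that by (simp add: S_def)
        show ?thesis using xT_sum[where \<theta>=\<theta> and T=T and B=B and b=b, OF ctx s] xT_bounds(1)[where \<theta>=\<theta> and T=T and B=B and b=b, OF ctx s]
          by (auto simp: x_def m_def intro: sum_nonneg)
      qed
      show ?thesis unfolding P_def
        using avg_bounds(2)[OF fS epos, where v="\<lambda>\<sigma>. \<Sum>i\<in>T. x i \<sigma>" and lo=0 and hi=m] h by auto
    qed
    finally show ?thesis .
  qed
  have sumT: "(\<Sum>i\<in>T. (Dv \<theta> T B i)\<^sup>2) \<le> m + M * m"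
  proof -
    have "(\<Sum>i\<in>T. (Dv \<theta> T B i)\<^sup>2) \<le> (\<Sum>i\<in>T. 1 + (X i)\<^sup>2)"
    proof (intro sum_mono)
      fix i assume i: "i \<in> T"
      have "(1 - X i)\<^sup>2 = 1 - 2 * X i + (X i)\<^sup>2" by (simp add: power2_diff)
      then show "(Dv \<theta> T B i)\<^sup>2 \<le> 1 + (X i)\<^sup>2" using DT[OF i] Xb[OF i] by simp
    qed
    also have "\<dots> = m + (\<Sum>i\<in>T. (X i)\<^sup>2)" by (simp add: sum.distrib m_def)
    also have "\<dots> \<le> m + M * m" using sq_sum[OF M0, where I=T and y=X and K=m] Xb Xsum by auto
    finally show ?thesis .
  qed
  have sumB: "(\<Sum>i\<in>B. (Dv \<theta> T B i)\<^sup>2) \<le> M * m"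
  proof -
    have "(\<Sum>i\<in>B. (Dv \<theta> T B i)\<^sup>2) = (\<Sum>i\<in>B. (Y i)\<^sup>2)" by (intro sum.cong) (auto simp: DB)
    also have "\<dots> \<le> M * m" using sq_sum[OF M0, where I=B and y=Y and K=m] Yb Ysum by auto
    finally show ?thesis .
  qed
  have tot: "(\<Sum>i\<in>T \<union> B. (Dv \<theta> T B i)\<^sup>2) \<le> m + 2 * m * (m * (exp (2*b) / q))"
  proof -
    have "m + 2 * m * (m * (exp (2*b) / q)) = m + M * m + M * m" by (simp add: M_def algebra_simps)
    moreover have "(\<Sum>i\<in>T \<union> B. (Dv \<theta> T B i)\<^sup>2) \<le> (m + M * m) + M * m"
      unfolding sum.union_disjoint[OF fT fB assms(5)] by (rule add_mono[OF sumT sumB])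
    ultimately show ?thesis by simp
  qed
  have a1: "exp (2*b) \<ge> 1" using b0 by simp
  have fin: "m + 2 * m * (m * (exp (2*b) / q)) \<le> 2 * m * exp (2*b) * ((m + q) / (m + q - m))\<^sup>2"
    by (rule final_arith[OF m0 q0 a1])
  show ?thesis
  proof (intro exI[of _ "Dv \<theta> T B"] conjI allI impI)
    fix i assume "i < d"
    show "((\<lambda>t. ln (PL_prob (\<theta>(i := t)) T B)) has_real_derivative Dv \<theta> T B i) (at (\<theta> i))"
      by (rule d_main[OF fB assms(4) fT])
  next
    show "(\<Sum>i\<in>T \<union> B. (Dv \<theta> T B i)\<^sup>2) \<le> 2 * real (card T) * exp (2 * b)
                 * (real (card T + card B) / (real (card T + card B) - real (card T)))\<^sup>2"
      using tot fin by (simp add: m_def q_def)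
  next
    fix i assume "i < d" "i \<notin> T \<union> B"
    then show "Dv \<theta> T B i = 0"
      using Ld'_out[where \<theta>=\<theta> and T=T and B=B and b=b, OF ctx _ \<open>i \<notin> T \<union> B\<close>] by (simp add: Dv_eq S_def)
  qed
qed


end
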